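(* Let $\Gamma$ be a class of continuous, nondecreasing, nonnegative functions $\mathbb{R}\to\mathbb{R}$ such that for every compact $K\subset\mathbb{R}$, every continuous nondecreasing nonnegative $h:K\to\mathbb{R}$ and every $\eta>0$ there is $\gamma\in\Gamma$ with $\sup_K|h-\gamma|<\eta$. Let $\mathcal{G}$ be a class of convex real functions that are continuously differentiable on an open set containing $[0,1]^d$, such that for every $R(\boldsymbol{x})=\sum_{i=1}^N\psi_i(\boldsymbol{a}_i^\top\boldsymbol{x}+b_i)$ with each $\psi_i\in C^1(\mathbb{R})$ convex, and every $\eta>0$, there is $G\in\mathcal{G}$ with $\sup_{[0,1]^d}\|\nabla R-\nabla G\|<\eta$. Let $F(\boldsymbol{x})=T\big(\sum_{i=1}^N\psi_i(\boldsymbol{a}_i^\top\boldsymbol{x}+b_i)\big)$ on $[0,1]^d$, where $T\in C^1(\mathbb{R})$ is convex and nondecreasing and each $\psi_i\in C^1(\mathbb{R})$ is convex. Then for every $\epsilon>0$ there exist $\gamma\in\Gamma$, $G\in\mathcal{G}$ and $\beta\in\mathbb{R}$ such that $h(\boldsymbol{x})=\gamma(G(\boldsymbol{x})+\beta)\nabla G(\boldsymbol{x})$ satisfies $\sup_{\boldsymbol{x}\in[0,1]^d}\|\nabla F(\boldsymbol{x})-h(\boldsymbol{x})\|<\epsilon$. Moreover every such $h$ (with $\gamma\in\Gamma$, $G\in\mathcal{G}$, $\beta\in\mathbb{R}$) is the gradient of a convex $C^1$ function on $[0,1]^d$.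
   Context: $C^1(\mathbb{R})$: continuously differentiable real functions on $\mathbb{R}$. $\|\cdot\|$ is the Euclidean norm. *)

theory Defs
  imports "HOL-Analysis.Analysis"
begin

text \<open>The unit cube [0,1]^d inside real^'n (d = CARD('n)).\<close>
definition unit_cube :: "(real^'n) set" where
  "unit_cube = cbox 0 1"

definition grad :: "(real^'n \<Rightarrow> real) \<Rightarrow> real^'n \<Rightarrow> real^'n" where
  "grad f x = (THE D. GDERIV f x :> D)"

definition C1_on :: "(real^'n) set \<Rightarrow> (real^'n \<Rightarrow> real) \<Rightarrow> bool" where
  "C1_on S f \<longleftrightarrow> (\<forall>x\<in>S. f differentiable (at x)) \<and> continuous_on S (grad f)"

definition ridge_sum :: "nat \<Rightarrow> (nat \<Rightarrow> real \<Rightarrow> real) \<Rightarrow> (nat \<Rightarrow> real^'n) \<Rightarrow> (nat \<Rightarrow> real)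
    \<Rightarrow> real^'n \<Rightarrow> real" where
  "ridge_sum N \<psi> a b x = (\<Sum>i=1..N. \<psi> i (a i \<bullet> x + b i))"

end

theory Submission
  imports Defs
begin


lemma linear_inner_rep:
  fixes f' :: "'a::euclidean_space \<Rightarrow> real"
  assumes "linear f'" shows "f' h = h \<bullet> (\<Sum>i\<in>Basis. f' i *\<^sub>R i)"
proof -
  have "f' h = f' (\<Sum>i\<in>Basis. (h\<bullet>i) *\<^sub>R i)" by (simp add: euclidean_representation)
  also have "\<dots> = (\<Sum>i\<in>Basis. (h\<bullet>i) * f' i)" using assms by (simp add: linear_sum linear_scale)
  also have "\<dots> = h \<bullet> (\<Sum>i\<in>Basis. f' i *\<^sub>R i)" by (simp add: inner_sum_right mult.commute)
  finally show ?thesis .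
qed

lemma gderiv_unique:
  fixes f :: "'a::euclidean_space \<Rightarrow> real"
  assumes "GDERIV f x :> D" "GDERIV f x :> D'" shows "D = D'"
proof -
  have "(\<lambda>h. h \<bullet> D) = (\<lambda>h. h \<bullet> D')" using assms unfolding gderiv_def by (rule has_derivative_unique)
  then have "\<And>b. b \<bullet> D = b \<bullet> D'" by metis
  then show ?thesis by (metis euclidean_eqI inner_commute)
qed

lemma grad_eq: "GDERIV f x :> D \<Longrightarrow> grad f x = D"
  unfolding grad_def by (metis (mono_tags, lifting) gderiv_unique the_equality)

lemma diff_gderiv:
  assumes "f differentiable at x" shows "GDERIV f x :> grad f x"
proof -
  obtain f' where f': "(f has_derivative f') (at x)" using assms by (auto simp: differentiable_def)
  then have "linear f'" using has_derivative_linear by blast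
  then have "f' = (\<lambda>h. h \<bullet> (\<Sum>i\<in>Basis. f' i *\<^sub>R i))" using linear_inner_rep by blast
  then have "GDERIV f x :> (\<Sum>i\<in>Basis. f' i *\<^sub>R i)" unfolding gderiv_def using f' by simp
  then show ?thesis using grad_eq by metis
qed


lemma part2:
  fixes G :: "real^'n \<Rightarrow> real" and \<gamma> :: "real \<Rightarrow> real" and \<beta> :: real
  assumes gc: "continuous_on UNIV \<gamma>" and gm: "mono \<gamma>" and gp: "\<forall>t. 0 \<le> \<gamma> t"
    and Gcvx: "convex_on UNIV G" and U: "open U" "unit_cube \<subseteq> U" and GC1: "C1_on U G"
  shows "\<exists>\<Phi> :: real^'n \<Rightarrow> real.
           convex_on unit_cube \<Phi> \<and> (\<exists>U. open U \<and> unit_cube \<subseteq> U \<and> C1_on U \<Phi>) \<and>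
           (\<forall>x\<in>unit_cube. GDERIV \<Phi> x :> (\<gamma> (G x + \<beta>) *\<^sub>R grad G x))"
proof -
  have Gdiff: "\<forall>x\<in>U. G differentiable at x" and gradc: "continuous_on U (grad G)"
    using GC1 unfolding C1_on_def by auto
  have Gcont: "continuous_on U G"
    using Gdiff by (meson continuous_at_imp_continuous_on differentiable_imp_continuous_within)
  have cc: "compact (unit_cube :: (real^'n) set)" unfolding unit_cube_def by simp
  have "continuous_on unit_cube (\<lambda>x. G x + \<beta>)"
    using Gcont U(2) by (auto intro!: continuous_intros elim: continuous_on_subset)
  then have "bounded ((\<lambda>x. G x + \<beta>) ` unit_cube)"
    using cc compact_continuous_image compact_imp_bounded by blast
  then obtain B where B: "B > 0" "\<forall>x\<in>unit_cube. \<bar>G x + \<beta>\<bar> \<le> B"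
    unfolding bounded_pos by force
  define r where "r = B + 1"
  have r: "r > 0" "\<forall>x\<in>unit_cube. \<bar>G x + \<beta>\<bar> < r" using B unfolding r_def by auto
  define I where "I = {-r<..<r}"
  define U' where "U' = U \<inter> (\<lambda>x. G x + \<beta>) -` I"
  have oU': "open U'" unfolding U'_def I_def
    by (rule continuous_open_preimage) (use Gcont U in \<open>auto intro!: continuous_intros\<close>)
  have cU': "unit_cube \<subseteq> U'" using r U(2) unfolding U'_def I_def by (force simp: abs_less_iff)
  define Gam where "Gam t = integral {-r..t} \<gamma>" for t
  have Gder: "(Gam has_real_derivative \<gamma> t) (at t)" if "t \<in> I" for t
  proof -
    have "(Gam has_real_derivative \<gamma> t) (at t within {-r..r})"
      unfolding Gam_def[abs_def]
      by (rule integral_has_real_derivative) (use gc that I_def in \<open>auto elim: continuous_on_subset\<close>)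
    moreover have "at t within {-r..r} = at t" using that I_def by (intro at_within_Icc_at) auto
    ultimately show ?thesis by simp
  qed
  define \<Phi> where "\<Phi> x = Gam (G x + \<beta>)" for x
  have Phider: "GDERIV \<Phi> x :> (\<gamma> (G x + \<beta>) *\<^sub>R grad G x)" if "x \<in> U'" for x
  proof -
    have "GDERIV (\<lambda>x. G x + \<beta>) x :> grad G x + 0"
      by (rule GDERIV_add[OF diff_gderiv GDERIV_const]) (use Gdiff that U'_def in auto)
    then have "GDERIV (\<lambda>x. G x + \<beta>) x :> grad G x" by simp
    moreover have "G x + \<beta> \<in> I" using that U'_def by auto
    ultimately show ?thesis unfolding \<Phi>_def using GDERIV_DERIV_compose Gder by blast
  qed
  have "C1_on U' \<Phi>"
    unfolding C1_on_def
  proof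
    show "\<forall>x\<in>U'. \<Phi> differentiable at x"
      using Phider unfolding gderiv_def differentiable_def by blast
    have "continuous_on U' (\<lambda>x. \<gamma> (G x + \<beta>) *\<^sub>R grad G x)"
    proof (intro continuous_intros)
      show "continuous_on U' (\<lambda>x. \<gamma> (G x + \<beta>))"
        using gc Gcont U'_def by (auto intro!: continuous_on_compose2[OF gc] continuous_intros elim: continuous_on_subset)
      show "continuous_on U' (grad G)" using gradc U'_def by (auto elim: continuous_on_subset)
    qed
    moreover have "\<And>x. x \<in> U' \<Longrightarrow> grad \<Phi> x = \<gamma> (G x + \<beta>) *\<^sub>R grad G x"
      using Phider grad_eq by blast
    ultimately show "continuous_on U' (grad \<Phi>)"
      using continuous_on_cong by (metis (no_types, lifting))
  qed
  have GamC: "convex_on I Gam"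
  proof (rule convex_on_realI[where f'=\<gamma>])
    show "connected I" unfolding I_def by simp
  qed (use Gder gm in \<open>blast, simp add: mono_def\<close>)
  have GamM: "Gam s \<le> Gam t" if "s \<in> I" "t \<in> I" "s \<le> t" for s t
  proof -
    have sub: "{s..t} \<subseteq> I" using that unfolding I_def by auto
    show ?thesis by (rule deriv_nonneg_imp_mono[of s t Gam \<gamma>]) (use sub Gder gp that(3) in blast)+
  qed
  have "convex_on unit_cube \<Phi>"
    unfolding convex_on_def
  proof (intro conjI ballI allI impI)
    show "convex (unit_cube :: (real^'n) set)" unfolding unit_cube_def by simp
    fix x y :: "real^'n" and u v :: real
    assume xy: "x \<in> unit_cube" "y \<in> unit_cube" and uv: "0 \<le> u" "0 \<le> v" "u + v = 1"
    have cvx: "convex (unit_cube :: (real^'n) set)" unfolding unit_cube_def by simp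
    have in1: "u *\<^sub>R x + v *\<^sub>R y \<in> unit_cube"
      using convexD[OF cvx xy uv] .
    have gx: "G x + \<beta> \<in> I" "G y + \<beta> \<in> I" "G (u *\<^sub>R x + v *\<^sub>R y) + \<beta> \<in> I"
      using r(2) xy in1 unfolding I_def by (force simp: abs_less_iff)+
    have cI: "convex I" unfolding I_def by simp
    have in2: "u * (G x + \<beta>) + v * (G y + \<beta>) \<in> I"
      using convexD[OF cI gx(1) gx(2) uv] by simp
    have "G (u *\<^sub>R x + v *\<^sub>R y) \<le> u * G x + v * G y"
      using Gcvx uv unfolding convex_on_def by blast
    moreover have "u * (G x + \<beta>) + v * (G y + \<beta>) = u * G x + v * G y + (u + v) * \<beta>"
      by (simp add: algebra_simps)
    ultimately have le: "G (u *\<^sub>R x + v *\<^sub>R y) + \<beta> \<le> u * (G x + \<beta>) + v * (G y + \<beta>)"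
      using uv(3) by simp
    have "\<Phi> (u *\<^sub>R x + v *\<^sub>R y) \<le> Gam (u * (G x + \<beta>) + v * (G y + \<beta>))"
      unfolding \<Phi>_def using GamM[OF gx(3) in2 le] .
    also have "\<dots> \<le> u * Gam (G x + \<beta>) + v * Gam (G y + \<beta>)"
    proof -
      have "\<forall>a\<in>I. \<forall>b\<in>I. \<forall>u\<ge>0. \<forall>v\<ge>0. u + v = 1 \<longrightarrow> Gam (u *\<^sub>R a + v *\<^sub>R b) \<le> u * Gam a + v * Gam b"
        using GamC unfolding convex_on_def by blast
      then show ?thesis using gx(1,2) uv by simp
    qed
    finally show "\<Phi> (u *\<^sub>R x + v *\<^sub>R y) \<le> u * \<Phi> x + v * \<Phi> y" unfolding \<Phi>_def .
  qed
  then show ?thesis using oU' cU' \<open>C1_on U' \<Phi>\<close> Phider by blast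
qed


lemma C1_real_deriv:
  assumes "(f::real\<Rightarrow>real) C1_differentiable_on UNIV"
  obtains f' where "\<And>x. (f has_real_derivative f' x) (at x)" "continuous_on UNIV f'"
  using assms unfolding C1_differentiable_on_def has_real_derivative_iff_has_vector_derivative by blast

lemma zero_in_cube: "(0::real^'n) \<in> unit_cube"
  unfolding unit_cube_def by (simp add: mem_box_cart)

lemma ridge_gderiv:
  fixes a :: "nat \<Rightarrow> real^'n"
  assumes "\<And>i x. i \<in> {1..N} \<Longrightarrow> (\<psi> i has_real_derivative \<psi>' i x) (at x)"
  shows "GDERIV (ridge_sum N \<psi> a b) x :> (\<Sum>i=1..N. \<psi>' i (a i \<bullet> x + b i) *\<^sub>R a i)"
proof -
  have "GDERIV (\<lambda>x. \<psi> i (a i \<bullet> x + b i)) x :> \<psi>' i (a i \<bullet> x + b i) *\<^sub>R a i" if "i \<in> {1..N}" for i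
  proof -
    have h1: "GDERIV (\<lambda>x. a i \<bullet> x + b i) x :> a i"
      by (auto intro!: derivative_eq_intros simp: gderiv_def inner_commute)
    have h2: "(\<psi> i has_real_derivative \<psi>' i (a i \<bullet> x + b i)) (at (a i \<bullet> x + b i))" using assms that by blast
    show ?thesis using GDERIV_DERIV_compose[OF h1 h2] by simp
  qed
  then have "((\<lambda>x. \<Sum>i=1..N. \<psi> i (a i \<bullet> x + b i)) has_derivative
      (\<lambda>h. \<Sum>i=1..N. h \<bullet> (\<psi>' i (a i \<bullet> x + b i) *\<^sub>R a i))) (at x)"
    unfolding gderiv_def by (intro has_derivative_sum) auto
  then show ?thesis unfolding gderiv_def ridge_sum_def[abs_def] by (simp add: inner_sum_right)
qed

lemma convex_deriv_mono:
  fixes T :: "real \<Rightarrow> real"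
  assumes "convex_on UNIV T" "\<And>x. (T has_real_derivative T' x) (at x)" "s \<le> t"
  shows "T' s \<le> T' t"
proof -
  have 1: "T' s * (t - s) \<le> T t - T s"
    using convex_on_imp_above_tangent[of UNIV T s t "T' s"] assms by auto
  have 2: "T' t * (s - t) \<le> T s - T t"
    using convex_on_imp_above_tangent[of UNIV T t s "T' t"] assms by auto
  from 1 2 have "(T' t - T' s) * (t - s) \<ge> 0" by (simp add: algebra_simps)
  then show ?thesis using assms(3)
    by (cases "s = t") (auto simp: zero_le_mult_iff)
qed


lemma part1:
  fixes \<Gamma> :: "(real \<Rightarrow> real) set"
    and \<G> :: "(real^'n \<Rightarrow> real) set"
    and T :: "real \<Rightarrow> real"
    and N :: nat and \<psi> :: "nat \<Rightarrow> real \<Rightarrow> real"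
    and a :: "nat \<Rightarrow> real^'n" and b :: "nat \<Rightarrow> real"
    and \<epsilon> :: real
  assumes Gamma_dense: "\<And>K h \<eta>. compact K \<Longrightarrow> continuous_on K h \<Longrightarrow> mono_on K h \<Longrightarrow>
        (\<forall>t\<in>K. 0 \<le> h t) \<Longrightarrow> \<eta> > 0 \<Longrightarrow> \<exists>\<gamma>\<in>\<Gamma>. \<forall>t\<in>K. \<bar>h t - \<gamma> t\<bar> < \<eta>"
    and G_class: "\<forall>G\<in>\<G>. convex_on UNIV G \<and>
        (\<exists>U. open U \<and> unit_cube \<subseteq> U \<and> C1_on U G)"
    and G_dense: "\<And>M \<phi> c d \<eta>. (\<forall>i\<in>{1..M}. \<phi> i C1_differentiable_on UNIV \<and> convex_on UNIV (\<phi> i))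
        \<Longrightarrow> \<eta> > 0 \<Longrightarrow>
        \<exists>G\<in>\<G>. \<forall>x\<in>unit_cube. norm (grad (ridge_sum M \<phi> c d) x - grad G x) < \<eta>"
    and T_C1: "T C1_differentiable_on UNIV" and T_convex: "convex_on UNIV T" and T_mono: "mono T"
    and psi: "\<forall>i\<in>{1..N}. \<psi> i C1_differentiable_on UNIV \<and> convex_on UNIV (\<psi> i)"
    and eps: "\<epsilon> > 0"
  shows "\<exists>\<gamma>\<in>\<Gamma>. \<exists>G\<in>\<G>. \<exists>\<beta>::real. \<forall>x\<in>unit_cube.
           norm (grad (\<lambda>y. T (ridge_sum N \<psi> a b y)) x - \<gamma> (G x + \<beta>) *\<^sub>R grad G x) < \<epsilon>"
proof -
  obtain T' where T': "\<And>x. (T has_real_derivative T' x) (at x)" "continuous_on UNIV T'"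
    using C1_real_deriv[OF T_C1] by blast
  have T'mono: "T' s \<le> T' t" if "s \<le> t" for s t using convex_deriv_mono[OF T_convex T'(1) that] .
  have T'nn: "0 \<le> T' t" for t
    using mono_on_imp_deriv_nonneg[of UNIV T "T' t" t] T_mono T'(1) by (simp add: mono_on_def mono_def)
  have "\<forall>i\<in>{1..N}. \<exists>f'. (\<forall>x. (\<psi> i has_real_derivative f' x) (at x)) \<and> continuous_on UNIV f'"
    using psi C1_real_deriv by metis
  then obtain \<psi>' where \<psi>': "\<And>i x. i \<in> {1..N} \<Longrightarrow> (\<psi> i has_real_derivative \<psi>' i x) (at x)"
      "\<And>i. i \<in> {1..N} \<Longrightarrow> continuous_on UNIV (\<psi>' i)"
    by metis
  define R where "R = ridge_sum N \<psi> a b"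
  define gR where "gR x = (\<Sum>i=1..N. \<psi>' i (a i \<bullet> x + b i) *\<^sub>R a i)" for x
  have Rd: "GDERIV R x :> gR x" for x unfolding R_def gR_def by (rule ridge_gderiv[OF \<psi>'(1)])
  have gradR: "grad R x = gR x" for x using grad_eq[OF Rd] .
  have gradF: "grad (\<lambda>y. T (R y)) x = T' (R x) *\<^sub>R gR x" for x
    using grad_eq[OF GDERIV_DERIV_compose[OF Rd T'(1)]] .
  have gRc: "continuous_on UNIV gR"
    unfolding gR_def
  proof (intro continuous_on_sum ballI continuous_intros)
    fix i assume "i \<in> {1..N}"
    then show "continuous_on UNIV (\<lambda>x. \<psi>' i (a i \<bullet> x + b i))"
      by (intro continuous_on_compose2[OF \<psi>'(2)]) (auto intro!: continuous_intros)
  qed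
  have Rc: "continuous_on UNIV R"
    using Rd unfolding gderiv_def
    by (meson continuous_at_imp_continuous_on has_derivative_continuous)
  have cc: "compact (unit_cube :: (real^'n) set)" unfolding unit_cube_def by simp
  have "bounded (gR ` unit_cube)"
    using cc gRc compact_continuous_image compact_imp_bounded continuous_on_subset by (metis subset_UNIV)
  then obtain B where B: "B > 0" "\<forall>x\<in>unit_cube. norm (gR x) \<le> B" unfolding bounded_pos by force
  have "bounded (R ` unit_cube)"
    using cc Rc compact_continuous_image compact_imp_bounded continuous_on_subset by (metis subset_UNIV)
  then obtain C where C: "C > 0" "\<forall>x\<in>unit_cube. \<bar>R x\<bar> \<le> C" unfolding bounded_pos by force
  have "bounded (unit_cube :: (real^'n) set)" using cc compact_imp_bounded by blast
  then obtain D where D: "D > 0" "\<forall>x\<in>(unit_cube :: (real^'n) set). norm x \<le> D" unfolding bounded_pos by force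
  define K where "K = {-C-1..C+1}"
  have cK: "compact K" unfolding K_def by simp
  have "bounded (T' ` K)" using cK T'(2) compact_continuous_image compact_imp_bounded continuous_on_subset by (metis subset_UNIV)
  then obtain L0 where L0: "L0 > 0" "\<forall>t\<in>K. \<bar>T' t\<bar> \<le> L0" unfolding bounded_pos by force
  define L where "L = L0 + 1"
  define e1 where "e1 = \<epsilon> / (4 * B)"
  have e1: "e1 > 0" using eps B unfolding e1_def by simp
  have "uniformly_continuous_on K T'" using compact_uniformly_continuous[OF continuous_on_subset[OF T'(2)] cK] by simp
  then obtain \<delta> where \<delta>: "\<delta> > 0" "\<And>s t. s \<in> K \<Longrightarrow> t \<in> K \<Longrightarrow> \<bar>s - t\<bar> < \<delta> \<Longrightarrow> \<bar>T' s - T' t\<bar> < e1"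
    unfolding uniformly_continuous_on_def dist_real_def using e1 by metis
  obtain \<gamma> where \<gamma>: "\<gamma> \<in> \<Gamma>" "\<forall>t\<in>K. \<bar>T' t - \<gamma> t\<bar> < min 1 e1"
    using Gamma_dense[OF cK continuous_on_subset[OF T'(2)], of "min 1 e1"] T'mono T'nn e1
    by (auto simp: mono_on_def)
  define \<eta> where "\<eta> = min (\<epsilon> / (4 * L)) (min \<delta> 1 / (D + 1))"
  have \<eta>: "\<eta> > 0" using eps L0 \<delta> D unfolding \<eta>_def L_def by auto
  obtain G where G: "G \<in> \<G>" "\<forall>x\<in>unit_cube. norm (grad R x - grad G x) < \<eta>"
    using G_dense[OF psi \<eta>] unfolding R_def by blast
  obtain U where U: "open U" "unit_cube \<subseteq> U" "C1_on U G" using G_class G(1) by blast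
  have Gd: "GDERIV G x :> grad G x" if "x \<in> unit_cube" for x
    using diff_gderiv U that unfolding C1_on_def by blast
  define \<beta> where "\<beta> = R 0 - G 0"
  have close: "\<bar>R x - (G x + \<beta>)\<bar> < min \<delta> 1" if x: "x \<in> unit_cube" for x
  proof -
    have "norm ((R x - G x) - (R 0 - G 0)) \<le> \<eta> * norm (x - 0)"
    proof (rule differentiable_bound[where f'="\<lambda>x h. h \<bullet> (gR x - grad G x)"])
      show "convex (unit_cube :: (real^'n) set)" unfolding unit_cube_def by simp
      show "x \<in> unit_cube" "0 \<in> unit_cube" using x zero_in_cube by auto
      fix y :: "real^'n" assume y: "y \<in> unit_cube"
      have "GDERIV (\<lambda>x. R x - G x) y :> gR y - grad G y" using GDERIV_diff[OF Rd Gd[OF y]] .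
      then show "((\<lambda>x. R x - G x) has_derivative (\<lambda>h. h \<bullet> (gR y - grad G y))) (at y within unit_cube)"
        unfolding gderiv_def using has_derivative_at_withinI by blast
      show "onorm (\<lambda>h. h \<bullet> (gR y - grad G y)) \<le> \<eta>"
      proof (rule onorm_le)
        fix h :: "real^'n"
        have "norm (h \<bullet> (gR y - grad G y)) \<le> norm h * norm (gR y - grad G y)"
          using Cauchy_Schwarz_ineq2 by simp
        also have "\<dots> \<le> norm h * \<eta>"
          using G(2) y gradR by (intro mult_left_mono) (auto simp: less_imp_le)
        finally show "norm (h \<bullet> (gR y - grad G y)) \<le> \<eta> * norm h" by (simp add: mult.commute)
      qed
    qed
    then have "\<bar>R x - (G x + \<beta>)\<bar> \<le> \<eta> * norm x" unfolding \<beta>_def by (simp add: algebra_simps)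
    also have "\<dots> \<le> (min \<delta> 1 / (D + 1)) * D"
      using D x \<eta> unfolding \<eta>_def by (intro mult_mono) auto
    also have "\<dots> < min \<delta> 1"
    proof -
      have "\<And>m::real. m > 0 \<Longrightarrow> m / (D + 1) * D < m" using D by (simp add: field_simps)
      moreover have "min \<delta> 1 > 0" using \<delta> by simp
      ultimately show ?thesis by blast
    qed
    finally show ?thesis .
  qed
  show ?thesis
  proof (intro bexI[OF _ \<gamma>(1)] bexI[OF _ G(1)] exI ballI)
    fix x :: "real^'n" assume x: "x \<in> unit_cube"
    define s where "s = R x"
    define t where "t = G x + \<beta>"
    define p where "p = gR x"
    define q where "q = grad G x"
    have sK: "s \<in> K" using C x unfolding s_def K_def by auto
    have st: "\<bar>s - t\<bar> < min \<delta> 1" using close[OF x] unfolding s_def t_def .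
    have sC: "\<bar>s\<bar> \<le> C" using C x unfolding s_def by auto
    have tK: "t \<in> K" using sC st unfolding K_def by (auto simp: abs_le_iff abs_less_iff)
    have pB: "norm p \<le> B" using B x unfolding p_def by auto
    have pq: "norm (p - q) \<le> \<eta>" using G(2) x gradR unfolding p_def q_def by (auto simp: less_imp_le)
    have d1: "\<bar>T' s - T' t\<bar> < e1" using \<delta>(2)[OF sK tK] st by simp
    have d2: "\<bar>T' t - \<gamma> t\<bar> < e1" "\<bar>T' t - \<gamma> t\<bar> < 1" using \<gamma>(2) tK by auto
    have gb: "\<bar>\<gamma> t\<bar> \<le> L" using d2(2) L0(2) tK unfolding L_def by fastforce
    have eq: "T' s *\<^sub>R p - \<gamma> t *\<^sub>R q = (T' s - \<gamma> t) *\<^sub>R p + \<gamma> t *\<^sub>R (p - q)"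
      by (simp add: algebra_simps)
    have "norm (T' s *\<^sub>R p - \<gamma> t *\<^sub>R q) \<le> \<bar>T' s - \<gamma> t\<bar> * norm p + \<bar>\<gamma> t\<bar> * norm (p - q)"
      unfolding eq by (metis norm_scaleR norm_triangle_ineq)
    also have "\<dots> \<le> (2 * e1) * B + L * \<eta>"
    proof (rule add_mono)
      have "\<bar>T' s - \<gamma> t\<bar> \<le> 2 * e1" using d1 d2(1) by linarith
      then show "\<bar>T' s - \<gamma> t\<bar> * norm p \<le> (2 * e1) * B" using pB by (intro mult_mono) auto
      show "\<bar>\<gamma> t\<bar> * norm (p - q) \<le> L * \<eta>" using gb pq \<eta> by (intro mult_mono) auto
    qed
    also have "(2 * e1) * B = \<epsilon> / 2" unfolding e1_def using B by (simp add: field_simps)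
    also have "L * \<eta> \<le> \<epsilon> / 4"
    proof -
      have "L > 0" using L0 unfolding L_def by simp
      then have "L * \<eta> \<le> L * (\<epsilon> / (4 * L))" unfolding \<eta>_def by (intro mult_left_mono) auto
      also have "\<dots> = \<epsilon> / 4" using \<open>L > 0\<close> by (simp add: field_simps)
      finally show ?thesis .
    qed
    finally have "norm (T' s *\<^sub>R p - \<gamma> t *\<^sub>R q) < \<epsilon>" using eps by linarith
    then show "norm (grad (\<lambda>y. T (ridge_sum N \<psi> a b y)) x - \<gamma> (G x + \<beta>) *\<^sub>R grad G x) < \<epsilon>"
      using gradF unfolding R_def s_def t_def p_def q_def by simp
  qed
qed


theorem theorem6:
  fixes \<Gamma> :: "(real \<Rightarrow> real) set"
    and \<G> :: "(real^'n \<Rightarrow> real) set"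
    and T :: "real \<Rightarrow> real"
    and N :: nat and \<psi> :: "nat \<Rightarrow> real \<Rightarrow> real"
    and a :: "nat \<Rightarrow> real^'n" and b :: "nat \<Rightarrow> real"
    and \<epsilon> :: real
  assumes Gamma_class: "\<forall>\<gamma>\<in>\<Gamma>. continuous_on UNIV \<gamma> \<and> mono \<gamma> \<and> (\<forall>t. 0 \<le> \<gamma> t)"
    and Gamma_dense: "\<And>K h \<eta>. compact K \<Longrightarrow> continuous_on K h \<Longrightarrow> mono_on K h \<Longrightarrow>
        (\<forall>t\<in>K. 0 \<le> h t) \<Longrightarrow> \<eta> > 0 \<Longrightarrow> \<exists>\<gamma>\<in>\<Gamma>. \<forall>t\<in>K. \<bar>h t - \<gamma> t\<bar> < \<eta>"
    and G_class: "\<forall>G\<in>\<G>. convex_on UNIV G \<and>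
        (\<exists>U. open U \<and> unit_cube \<subseteq> U \<and> C1_on U G)"
    and G_dense: "\<And>M \<phi> c d \<eta>. (\<forall>i\<in>{1..M}. \<phi> i C1_differentiable_on UNIV \<and> convex_on UNIV (\<phi> i))
        \<Longrightarrow> \<eta> > 0 \<Longrightarrow>
        \<exists>G\<in>\<G>. \<forall>x\<in>unit_cube. norm (grad (ridge_sum M \<phi> c d) x - grad G x) < \<eta>"
    and T_C1: "T C1_differentiable_on UNIV" and T_convex: "convex_on UNIV T" and T_mono: "mono T"
    and psi: "\<forall>i\<in>{1..N}. \<psi> i C1_differentiable_on UNIV \<and> convex_on UNIV (\<psi> i)"
    and eps: "\<epsilon> > 0"
  shows "(\<exists>\<gamma>\<in>\<Gamma>. \<exists>G\<in>\<G>. \<exists>\<beta>::real. \<forall>x\<in>unit_cube.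
           norm (grad (\<lambda>y. T (ridge_sum N \<psi> a b y)) x - \<gamma> (G x + \<beta>) *\<^sub>R grad G x) < \<epsilon>)
       \<and> (\<forall>\<gamma>\<in>\<Gamma>. \<forall>G\<in>\<G>. \<forall>\<beta>::real. \<exists>\<Phi> :: real^'n \<Rightarrow> real.
           convex_on unit_cube \<Phi> \<and> (\<exists>U. open U \<and> unit_cube \<subseteq> U \<and> C1_on U \<Phi>) \<and>
           (\<forall>x\<in>unit_cube. GDERIV \<Phi> x :> (\<gamma> (G x + \<beta>) *\<^sub>R grad G x)))"
  proof (rule conjI)
  show "\<exists>\<gamma>\<in>\<Gamma>. \<exists>G\<in>\<G>. \<exists>\<beta>::real. \<forall>x\<in>unit_cube.
           norm (grad (\<lambda>y. T (ridge_sum N \<psi> a b y)) x - \<gamma> (G x + \<beta>) *\<^sub>R grad G x) < \<epsilon>"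
    by (rule part1[OF Gamma_dense G_class G_dense T_C1 T_convex T_mono psi eps])
  show "\<forall>\<gamma>\<in>\<Gamma>. \<forall>G\<in>\<G>. \<forall>\<beta>::real. \<exists>\<Phi> :: real^'n \<Rightarrow> real.
           convex_on unit_cube \<Phi> \<and> (\<exists>U. open U \<and> unit_cube \<subseteq> U \<and> C1_on U \<Phi>) \<and>
           (\<forall>x\<in>unit_cube. GDERIV \<Phi> x :> (\<gamma> (G x + \<beta>) *\<^sub>R grad G x))"
  proof (intro ballI allI)
    fix \<gamma> G \<beta> assume g: "\<gamma> \<in> \<Gamma>" and GG: "G \<in> \<G>"
    obtain U where "open U" "unit_cube \<subseteq> U" "C1_on U G" using G_class GG by blast
    then show "\<exists>\<Phi> :: real^'n \<Rightarrow> real.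
           convex_on unit_cube \<Phi> \<and> (\<exists>U. open U \<and> unit_cube \<subseteq> U \<and> C1_on U \<Phi>) \<and>
           (\<forall>x\<in>unit_cube. GDERIV \<Phi> x :> (\<gamma> (G x + \<beta>) *\<^sub>R grad G x))"
      using part2[of \<gamma> G U \<beta>] Gamma_class g G_class GG by blast
  qed
qed

end
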